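(* Let $n\ge 2$, $N=2^n$, $s=(N-1)/2$. Consider the unrestricted close Hadamard problem: given oracle access (via $\hat U_z$) to a string $z\in C=A\cup B$, where $A=\Xi^{(N)}_{N/2-1}$ and $B=\bigcup_{k=0}^{N/2-2}\Xi^{(N)}_k$, decide whether $z\in A$ or $z\in B$. For every $\delta>0$ there is a number $q$ depending only on $\delta$ (not on $n$) and a quantum algorithm making $q$ queries to $\hat U_z$ that, for every $z\in C$, decides correctly with error probability at most $\delta$; the algorithm consists of $q$ independent runs of the circuit that prepares $\tfrac1{\sqrt2}(|\tfrac12\rangle_s+|-\tfrac12\rangle_s)$, applies $\hat H^{\otimes n}$, $\hat U_z$, $\hat H^{\otimes n}$ (followed by a fixed $z$-independent unitary) and measures in the spin basis, together with classical post-processing of the outcomes.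
   Context: Work in $\mathbb{C}^N$ with computational basis $\{|y\rangle : y=0,\dots,N-1\}$; spin basis states $|m\rangle_s$, $m\in\{-s,\dots,s\}$, are identified via $|m\rangle_s=|m+s\rangle$. For $x,y\in\{0,\dots,N-1\}$, $x\cdot y\in\{0,1\}$ is the mod-2 inner product of their $n$-bit binary expansions; $\hat H^{\otimes n}|y\rangle=N^{-1/2}\sum_x(-1)^{x\cdot y}|x\rangle$. The Hadamard codeword $W^{(N)}_j\in\{0,1\}^N$ has bit $x\cdot j$ at position $x$. For $z\in\{0,1\}^N$ the oracle is the diagonal unitary $\hat U_z|x\rangle=(-1)^{z_x}|x\rangle$; a query is one application of $\hat U_z$. The set $\Xi^{(N)}_j$ (codewords with unrestricted errors) consists of all strings $z\in\{0,1\}^N$ at Hamming distance strictly less than $N/16$ from $W^{(N)}_j$. *)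

theory Defs
  imports "HOL-Analysis.Analysis"
begin

(* States of C^N are functions nat => complex; only indices y < N matter.
  Binary strings z in {0,1}^N are functions nat => bool; only positions x < N matter. *)

definition bdot :: "nat \<Rightarrow> nat \<Rightarrow> nat \<Rightarrow> nat" where
  "bdot n x y = (\<Sum>i<n. (if bit x i \<and> bit y i then 1 else 0)) mod 2"

definition hadamard_n :: "nat \<Rightarrow> (nat \<Rightarrow> complex) \<Rightarrow> (nat \<Rightarrow> complex)" where
  "hadamard_n n \<psi> = (\<lambda>x. (1 / complex_of_real (sqrt (2 ^ n))) *
      (\<Sum>y<2^n. (-1) ^ (bdot n x y) * \<psi> y))"

definition codeword :: "nat \<Rightarrow> nat \<Rightarrow> nat \<Rightarrow> bool" where
  "codeword n j = (\<lambda>x. bdot n x j = 1)"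

definition hamming :: "nat \<Rightarrow> (nat \<Rightarrow> bool) \<Rightarrow> (nat \<Rightarrow> bool) \<Rightarrow> nat" where
  "hamming N z w = card {x. x < N \<and> z x \<noteq> w x}"

definition Xi :: "nat \<Rightarrow> nat \<Rightarrow> (nat \<Rightarrow> bool) set" where
  "Xi n j = {z. real (hamming (2^n) z (codeword n j)) < real (2^n) / 16}"

definition oracle_U :: "(nat \<Rightarrow> bool) \<Rightarrow> (nat \<Rightarrow> complex) \<Rightarrow> (nat \<Rightarrow> complex)" where
  "oracle_U z \<psi> = (\<lambda>x. (if z x then -1 else 1) * \<psi> x)"

(* Spin basis state |m>_s with s = (N-1)/2, identified with |m+s>. *)
definition spin_ket :: "nat \<Rightarrow> real \<Rightarrow> (nat \<Rightarrow> complex)" where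
  "spin_ket N m = (\<lambda>y. if real y = m + (real N - 1) / 2 then 1 else 0)"

definition init_state :: "nat \<Rightarrow> (nat \<Rightarrow> complex)" where
  "init_state N = (\<lambda>y. (1 / complex_of_real (sqrt 2)) *
      (spin_ket N (1/2) y + spin_ket N (-1/2) y))"

definition unitary_mat :: "nat \<Rightarrow> (nat \<Rightarrow> nat \<Rightarrow> complex) \<Rightarrow> bool" where
  "unitary_mat N V \<longleftrightarrow> (\<forall>i<N. \<forall>j<N. (\<Sum>k<N. cnj (V k i) * V k j) = (if i = j then 1 else 0))"

definition apply_mat :: "nat \<Rightarrow> (nat \<Rightarrow> nat \<Rightarrow> complex) \<Rightarrow> (nat \<Rightarrow> complex) \<Rightarrow> (nat \<Rightarrow> complex)" where
  "apply_mat N V \<psi> = (\<lambda>y. \<Sum>x<N. V y x * \<psi> x)"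

definition final_state :: "nat \<Rightarrow> (nat \<Rightarrow> nat \<Rightarrow> complex) \<Rightarrow> (nat \<Rightarrow> bool) \<Rightarrow> (nat \<Rightarrow> complex)" where
  "final_state n V z =
     apply_mat (2^n) V (hadamard_n n (oracle_U z (hadamard_n n (init_state (2^n)))))"

definition outcome_prob :: "nat \<Rightarrow> (nat \<Rightarrow> nat \<Rightarrow> complex) \<Rightarrow> (nat \<Rightarrow> bool) \<Rightarrow> nat \<Rightarrow> real" where
  "outcome_prob n V z y = (cmod (final_state n V z y))^2"

definition outcome_seqs :: "nat \<Rightarrow> nat \<Rightarrow> nat list set" where
  "outcome_seqs N q = {ys. length ys = q \<and> set ys \<subseteq> {..<N}}"

definition runs_prob :: "nat \<Rightarrow> (nat \<Rightarrow> nat \<Rightarrow> complex) \<Rightarrow> (nat \<Rightarrow> bool) \<Rightarrow> nat \<Rightarrow> (nat list \<Rightarrow> bool) \<Rightarrow> real" where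
  "runs_prob n V z q P = (\<Sum>ys\<in>{ys\<in>outcome_seqs (2^n) q. P ys}. prod_list (map (outcome_prob n V z) ys))"

definition setA :: "nat \<Rightarrow> (nat \<Rightarrow> bool) set" where
  "setA n = Xi n (2^n div 2 - 1)"

definition setB :: "nat \<Rightarrow> (nat \<Rightarrow> bool) set" where
  "setB n = (\<Union>k\<in>{0..2^n div 2 - 2}. Xi n k)"

end

theory Submission
  imports Defs
begin

definition sg :: "nat \<Rightarrow> nat \<Rightarrow> nat \<Rightarrow> real" where
  "sg n x y = (-1) ^ (bdot n x y)"

lemma neg1_mod2: "(-1::real) ^ (k mod 2) = (-1) ^ k"
  by (simp add: minus_one_power_iff)

lemma sg_alt: "sg n x y = (-1) ^ (\<Sum>i<n. (if bit x i \<and> bit y i then 1 else 0))"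
  unfolding sg_def bdot_def by (rule neg1_mod2)

lemma sg_Suc: "sg (Suc n) x y = (if odd x \<and> odd y then -1 else 1) * sg n (x div 2) (y div 2)"
  unfolding sg_alt sum.lessThan_Suc_shift
  by (simp add: power_add bit_Suc bit_0)

lemma sg_0 [simp]: "sg 0 x y = 1"
  by (simp add: sg_alt)

lemma sum_split2: "(\<Sum>x<2*m. f x) = (\<Sum>i<m. f (2*i)) + (\<Sum>i<m. f (2*i+1::nat))"
  by (induction m) (simp_all add: algebra_simps)

lemma sg_orth: "j < 2^n \<Longrightarrow> c < 2^n \<Longrightarrow>
  (\<Sum>x<2^n. sg n x j * sg n x c) = (if j = c then 2^n else 0)"
proof (induction n arbitrary: j c)
  case 0 thus ?case by simp
next
  case (Suc n)
  define g where "g i = sg n i (j div 2) * sg n i (c div 2)" for i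
  have jd: "j div 2 < 2^n" "c div 2 < 2^n" using Suc.prems by auto
  have "(\<Sum>x<2^Suc n. sg (Suc n) x j * sg (Suc n) x c)
     = (\<Sum>i<2^n. g i) + (\<Sum>i<2^n. (if odd j then -1 else 1) * (if odd c then -1 else 1) * g i)"
    unfolding power_Suc sum_split2 sg_Suc g_def by (simp add: algebra_simps)
  also have "\<dots> = (1 + (if odd j then -1 else 1) * (if odd c then -1 else 1)) * (\<Sum>i<2^n. g i)"
    by (simp add: sum_distrib_left algebra_simps sum_negf)
  also have "(\<Sum>i<2^n. g i) = (if j div 2 = c div 2 then 2^n else 0)"
    unfolding g_def by (rule Suc.IH[OF jd])
  finally show ?case
    apply (cases "j = c")
    apply simp
    apply (cases "j div 2 = c div 2")
    apply (auto simp: power_Suc)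
    by (metis dvd_mult_div_cancel odd_two_times_div_two_succ)+
qed

definition cnt0 :: "nat list \<Rightarrow> real" where
  "cnt0 ys = real (length (filter (\<lambda>y. y = 0) ys))"

lemma cnt0_Nil [simp]: "cnt0 [] = 0" and cnt0_Cons [simp]: "cnt0 (y#ys) = (if y = 0 then 1 else 0) + cnt0 ys"
  by (auto simp: cnt0_def)

lemma seqs_finite: "finite (outcome_seqs N q)"
proof -
  have "outcome_seqs N q = {xs. set xs \<subseteq> {..<N} \<and> length xs = q}"
    unfolding outcome_seqs_def by auto
  thus ?thesis by (simp add: finite_lists_length_eq)
qed

lemma seqs_Suc: "outcome_seqs N (Suc q) = (\<lambda>(y,ys). y#ys) ` ({..<N} \<times> outcome_seqs N q)"
proof
  show "outcome_seqs N (Suc q) \<subseteq> (\<lambda>(y,ys). y#ys) ` ({..<N} \<times> outcome_seqs N q)"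
  proof
    fix xs assume "xs \<in> outcome_seqs N (Suc q)"
    then obtain y ys where "xs = y#ys" "length ys = q" "y < N" "set ys \<subseteq> {..<N}"
      unfolding outcome_seqs_def by (cases xs) auto
    thus "xs \<in> (\<lambda>(y,ys). y#ys) ` ({..<N} \<times> outcome_seqs N q)"
      unfolding outcome_seqs_def by force
  qed
qed (auto simp: outcome_seqs_def)

lemma sum_seqs_Suc: "(\<Sum>ys\<in>outcome_seqs N (Suc q). F ys) = (\<Sum>y<N. \<Sum>ys\<in>outcome_seqs N q. F (y#ys))"
proof -
  have inj: "inj_on (\<lambda>(y,ys). y#ys) ({..<N} \<times> outcome_seqs N q)"
    by (auto simp: inj_on_def)
  show ?thesis
    unfolding seqs_Suc sum.reindex[OF inj]
    by (simp add: sum.cartesian_product split_def)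
qed

lemma seqs_0: "outcome_seqs N 0 = {[]}"
  by (auto simp: outcome_seqs_def)

context
  fixes p :: "nat \<Rightarrow> real" and N :: nat
  assumes tot: "(\<Sum>y<N. p y) = 1" and Npos: "0 < N"
begin

abbreviation "w ys \<equiv> prod_list (map p ys)"

lemma M0: "(\<Sum>ys\<in>outcome_seqs N q. w ys) = 1"
proof (induction q)
  case 0 thus ?case by (simp add: seqs_0)
next
  case (Suc q)
  thus ?case unfolding sum_seqs_Suc by (simp add: sum_distrib_left[symmetric] tot)
qed

lemma p0sum: "(\<Sum>y<N. p y * (if y = 0 then 1 else 0)) = p 0"
  using Npos by (simp add: if_distrib sum.delta' cong: if_cong)

lemma M1: "(\<Sum>ys\<in>outcome_seqs N q. w ys * cnt0 ys) = q * p 0"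
proof (induction q)
  case 0 thus ?case by (simp add: seqs_0)
next
  case (Suc q)
  have "(\<Sum>ys\<in>outcome_seqs N (Suc q). w ys * cnt0 ys)
     = (\<Sum>y<N. p y * (if y = 0 then 1 else 0) * (\<Sum>ys\<in>outcome_seqs N q. w ys)
                + p y * (\<Sum>ys\<in>outcome_seqs N q. w ys * cnt0 ys))"
    unfolding sum_seqs_Suc
    by (simp add: sum_distrib_left algebra_simps sum.distrib)
  also have "\<dots> = p 0 + p 0 * q"
    unfolding M0 Suc sum.distrib sum_distrib_right[symmetric] p0sum tot by simp
  finally show ?case by (simp add: algebra_simps)
qed

lemma M2: "(\<Sum>ys\<in>outcome_seqs N q. w ys * cnt0 ys ^ 2) = q * p 0 + real q * (real q - 1) * p 0 ^ 2"
proof (induction q)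
  case 0 thus ?case by (simp add: seqs_0)
next
  case (Suc q)
  have e: "((if y = 0 then 1 else 0) + c)^2 = (if y = 0 then 1 else 0) * (1 + 2 * c) + c^2" for y::nat and c::real
    by (simp add: power2_eq_square algebra_simps)
  have e2: "(c + (if y = 0 then 1 else 0))^2 = (if y = 0 then 1 else 0) * (1 + 2 * c) + c^2" for y::nat and c::real
    by (simp add: power2_eq_square algebra_simps)
  have "(\<Sum>ys\<in>outcome_seqs N (Suc q). w ys * cnt0 ys ^ 2)
     = (\<Sum>y<N. p y * (if y = 0 then 1 else 0) * ((\<Sum>ys\<in>outcome_seqs N q. w ys) + 2 * (\<Sum>ys\<in>outcome_seqs N q. w ys * cnt0 ys))
                + p y * (\<Sum>ys\<in>outcome_seqs N q. w ys * cnt0 ys ^ 2))"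
    unfolding sum_seqs_Suc
    by (simp add: e e2 sum_distrib_left algebra_simps sum.distrib)
  also have "\<dots> = p 0 * (1 + 2 * (q * p 0)) + (q * p 0 + real q * (real q - 1) * p 0 ^ 2)"
    unfolding M0 M1 Suc sum.distrib sum_distrib_right[symmetric] p0sum tot by simp
  finally show ?case by (cases q) (simp_all add: algebra_simps power2_eq_square)
qed

lemma var: "(\<Sum>ys\<in>outcome_seqs N q. w ys * (cnt0 ys - q * p 0) ^ 2) = q * p 0 * (1 - p 0)"
proof -
  have "(\<Sum>ys\<in>outcome_seqs N q. w ys * (cnt0 ys - q * p 0) ^ 2)
     = (\<Sum>ys\<in>outcome_seqs N q. w ys * cnt0 ys ^ 2) - 2 * (q * p 0) * (\<Sum>ys\<in>outcome_seqs N q. w ys * cnt0 ys)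
        + (q * p 0)^2 * (\<Sum>ys\<in>outcome_seqs N q. w ys)"
    by (simp add: power2_eq_square algebra_simps sum.distrib sum_subtractf sum_distrib_left)
  also have "\<dots> = q * p 0 * (1 - p 0)"
    unfolding M0 M1 M2 by (cases q) (simp_all add: algebra_simps power2_eq_square)
  finally show ?thesis .
qed

lemma cheb:
  assumes pnn: "\<And>y. p y \<ge> 0" and K: "K > 0"
    and P: "\<And>ys. P ys \<Longrightarrow> K \<le> (cnt0 ys - q * p 0) ^ 2"
  shows "(\<Sum>ys\<in>{ys\<in>outcome_seqs N q. P ys}. w ys) \<le> q / (4 * K)"
proof -
  have wnn: "w ys \<ge> 0" for ys using pnn by (induction ys) auto
  have "(\<Sum>ys\<in>{ys\<in>outcome_seqs N q. P ys}. w ys)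
     \<le> (\<Sum>ys\<in>{ys\<in>outcome_seqs N q. P ys}. w ys * (cnt0 ys - q * p 0) ^ 2 / K)"
  proof (rule sum_mono)
    fix ys assume "ys \<in> {ys\<in>outcome_seqs N q. P ys}"
    hence "K \<le> (cnt0 ys - q * p 0) ^ 2" using P by auto
    hence "w ys * K \<le> w ys * (cnt0 ys - q * p 0) ^ 2" using wnn by (simp add: mult_left_mono)
    thus "w ys \<le> w ys * (cnt0 ys - q * p 0) ^ 2 / K" using K by (simp add: field_simps)
  qed
  also have "\<dots> \<le> (\<Sum>ys\<in>outcome_seqs N q. w ys * (cnt0 ys - q * p 0) ^ 2 / K)"
    by (rule sum_mono2[OF seqs_finite]) (use wnn K in auto)
  also have "\<dots> = q * p 0 * (1 - p 0) / K"
    by (simp add: sum_divide_distrib[symmetric] var)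
  also have "\<dots> \<le> q / (4 * K)"
  proof -
    have h: "p 0 * (1 - p 0) \<le> 1/4"
    proof -
      have "0 \<le> (2*p 0 - 1)^2" by simp
      thus ?thesis by (simp add: power2_eq_square algebra_simps)
    qed
    have "q * p 0 * (1 - p 0) \<le> q * (1/4)"
      using mult_left_mono[OF h, of "real q"] by (simp add: algebra_simps)
    hence "q * p 0 * (1 - p 0) / K \<le> q * (1/4) / K"
      by (rule divide_right_mono) (use K in auto)
    thus ?thesis by simp
  qed
  finally show ?thesis .
qed

end

lemma m1pow_cplx: "(-1::complex) ^ k = of_real ((-1) ^ k)"
  by simp

lemma had_sg: "hadamard_n n \<psi> x = of_real (1 / sqrt (2^n)) * (\<Sum>y<2^n. of_real (sg n x y) * \<psi> y)"
  unfolding hadamard_n_def sg_def by simp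

lemma sg_cnj: "cnj (of_real (sg n x y)) = of_real (sg n x y)"
  by simp

lemma sg_sym: "sg n x y = sg n y x"
  unfolding sg_alt by (simp add: conj_commute)

lemma sqrt_sq_pow: "sqrt (2^n) * sqrt (2^n) = (2::real)^n"
  by simp

lemma parseval_c: "(\<Sum>x<2^n. hadamard_n n \<psi> x * cnj (hadamard_n n \<psi> x)) = (\<Sum>y<2^n. \<psi> y * cnj (\<psi> y))"
proof -
  define c where "c = (1 / sqrt (2^n) :: real)"
  have cc: "c * c * 2^n = 1" unfolding c_def by simp
  have "(\<Sum>x<2^n. hadamard_n n \<psi> x * cnj (hadamard_n n \<psi> x))
      = (\<Sum>x<2^n. of_real (c*c) * ((\<Sum>y<2^n. of_real (sg n x y) * \<psi> y) * (\<Sum>y'<2^n. of_real (sg n x y') * cnj (\<psi> y'))))"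
    unfolding had_sg c_def[symmetric] by (simp add: cnj_sum algebra_simps)
  also have "\<dots> = (\<Sum>x<2^n. \<Sum>y<2^n. \<Sum>y'<2^n. of_real (c*c) * (of_real (sg n x y * sg n x y') * (\<psi> y * cnj (\<psi> y'))))"
    unfolding sum_product by (simp add: sum_distrib_left algebra_simps)
  also have "\<dots> = (\<Sum>y<2^n. \<Sum>y'<2^n. \<Sum>x<2^n. of_real (c*c) * (of_real (sg n x y * sg n x y') * (\<psi> y * cnj (\<psi> y'))))"
    apply (rule trans[OF sum.swap])
    apply (rule sum.cong[OF refl])
    apply (rule sum.swap)
    done
  also have "\<dots> = (\<Sum>y<2^n. \<Sum>y'<2^n. of_real (c*c) * (of_real (\<Sum>x<2^n. sg n x y * sg n x y') * (\<psi> y * cnj (\<psi> y'))))"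
    by (simp add: sum_distrib_left sum_distrib_right)
  also have "\<dots> = (\<Sum>y<2^n. \<Sum>y'<2^n. (if y = y' then of_real (c*c*2^n) * (\<psi> y * cnj (\<psi> y')) else 0))"
    by (intro sum.cong refl) (simp add: sg_orth)
  also have "\<dots> = (\<Sum>y<2^n. \<psi> y * cnj (\<psi> y))"
    unfolding cc by simp
  finally show ?thesis .
qed

lemma parseval: "(\<Sum>x<2^n. (cmod (hadamard_n n \<psi> x))^2) = (\<Sum>y<2^n. (cmod (\<psi> y))^2)"
proof -
  have "complex_of_real (\<Sum>x<2^n. (cmod (hadamard_n n \<psi> x))^2) = complex_of_real (\<Sum>y<2^n. (cmod (\<psi> y))^2)"
    unfolding of_real_sum complex_norm_square parseval_c ..
  thus ?thesis by (simp only: of_real_eq_iff)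
qed

lemma oracle_norm: "cmod (oracle_U z \<psi> x) = cmod (\<psi> x)"
  unfolding oracle_U_def by (simp add: norm_mult)

lemma spin_half: "spin_ket (2^Suc m) (1/2) y = (if y = 2^m then 1 else 0)"
proof -
  have "(real y = 1/2 + (real (2^Suc m) - 1) / 2) \<longleftrightarrow> y = 2^m"
  proof -
    have "1/2 + (real (2^Suc m) - 1) / 2 = real (2^m::nat)" by (simp add: field_simps)
    thus ?thesis by (metis of_nat_eq_iff)
  qed
  thus ?thesis unfolding spin_ket_def by simp
qed

lemma spin_mhalf: "spin_ket (2^Suc m) (-1/2) y = (if y = 2^m - 1 then 1 else 0)"
proof -
  have "(real y = -1/2 + (real (2^Suc m) - 1) / 2) \<longleftrightarrow> y = 2^m - 1"
  proof -
    have p: "(1::nat) \<le> 2^m" by simp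
    have "-1/2 + (real (2^Suc m) - 1) / 2 = real (2^m - 1::nat)"
      using p by (simp add: of_nat_diff field_simps)
    thus ?thesis by (metis of_nat_eq_iff)
  qed
  thus ?thesis unfolding spin_ket_def by simp
qed

lemma init_eq: "init_state (2^Suc m) y =
   (if y = 2^m then of_real (1/sqrt 2) else 0) + (if y = 2^m - 1 then of_real (1/sqrt 2) else 0)"
  unfolding init_state_def spin_half spin_mhalf by simp

lemma ab_less: "(2::nat)^m < 2^Suc m" "(2::nat)^m - 1 < 2^Suc m" "(2::nat)^m \<noteq> 2^m - 1"
proof -
  obtain k where k: "(2::nat)^m = Suc k" using not0_implies_Suc[of "(2::nat)^m"] by auto
  show "(2::nat)^m < 2^Suc m" "(2::nat)^m - 1 < 2^Suc m" "(2::nat)^m \<noteq> 2^m - 1"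
    unfolding power_Suc k by auto
qed

lemma init_norm: "(\<Sum>y<2^Suc m. (cmod (init_state (2^Suc m) y))^2) = 1"
proof -
  have "(\<Sum>y<2^Suc m. (cmod (init_state (2^Suc m) y))^2)
     = (\<Sum>y::nat<2^Suc m. (if y = 2^m then 1/2 else 0) + (if y = 2^m - 1 then 1/2 else 0))"
    unfolding init_eq using ab_less(3)[of m] by (intro sum.cong refl) (auto simp: power_divide norm_divide)
  also have "\<dots> = 1" using ab_less[of m] by (simp add: sum.distrib)
  finally show ?thesis .
qed

lemma had_init: "hadamard_n (Suc m) (init_state (2^Suc m)) =
   (\<lambda>x. of_real ((sg (Suc m) x (2^m) + sg (Suc m) x (2^m - 1)) / (sqrt (2^Suc m) * sqrt 2)))"
proof (rule ext)
  fix x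
  have "(\<Sum>y<2^Suc m. complex_of_real (sg (Suc m) x y) * init_state (2^Suc m) y)
      = (\<Sum>y::nat<2^Suc m. (if y = 2^m then of_real (sg (Suc m) x (2^m) / sqrt 2) else 0)
               + (if y = 2^m - 1 then of_real (sg (Suc m) x (2^m - 1) / sqrt 2) else 0))"
    unfolding init_eq by (intro sum.cong refl) auto
  also have "\<dots> = of_real (sg (Suc m) x (2^m) / sqrt 2) + of_real (sg (Suc m) x (2^m - 1) / sqrt 2)"
    using ab_less[of m] by (simp add: sum.distrib del: of_real_divide)
  finally have e: "(\<Sum>y<2^Suc m. complex_of_real (sg (Suc m) x y) * init_state (2^Suc m) y)
     = of_real ((sg (Suc m) x (2^m) + sg (Suc m) x (2^m - 1)) / sqrt 2)"
    by (simp add: add_divide_distrib)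
  show "hadamard_n (Suc m) (init_state (2^Suc m)) x =
   of_real ((sg (Suc m) x (2^m) + sg (Suc m) x (2^m - 1)) / (sqrt (2^Suc m) * sqrt 2))"
    unfolding had_sg e by (simp del: of_real_divide add: of_real_mult[symmetric])
qed

definition fz :: "(nat \<Rightarrow> bool) \<Rightarrow> nat \<Rightarrow> real" where
  "fz z x = (if z x then -1 else 1)"

definition Ssum :: "nat \<Rightarrow> (nat \<Rightarrow> bool) \<Rightarrow> real" where
  "Ssum m z = (\<Sum>x<2^Suc m. fz z x * (sg (Suc m) x (2^m) + sg (Suc m) x (2^m - 1)))"

lemma oracle_fz: "oracle_U z \<psi> = (\<lambda>x. of_real (fz z x) * \<psi> x)"
  unfolding oracle_U_def fz_def by (simp add: fun_eq_iff)

lemma sg_zero: "sg n 0 y = 1"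
  unfolding sg_alt by simp

definition Vid :: "nat \<Rightarrow> nat \<Rightarrow> complex" where
  "Vid i j = (if i = j then 1 else 0)"

lemma Vid_unitary: "unitary_mat N Vid"
  unfolding unitary_mat_def
proof (intro allI impI)
  fix i j assume ij: "i < N" "j < N"
  have "(\<Sum>k<N. cnj (Vid k i) * Vid k j) = (\<Sum>k<N. if k = i then (if i = j then 1 else 0) else 0)"
    by (intro sum.cong refl) (auto simp: Vid_def)
  thus "(\<Sum>k<N. cnj (Vid k i) * Vid k j) = (if i = j then 1 else 0)" using ij by simp
qed

lemma apply_Vid: "y < N \<Longrightarrow> apply_mat N Vid \<psi> y = \<psi> y"
  unfolding apply_mat_def Vid_def by (simp add: if_distrib[of "\<lambda>c. c * _"] cong: if_cong)

lemma total_prob: "(\<Sum>y<2^Suc m. outcome_prob (Suc m) Vid z y) = 1"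
proof -
  have "(\<Sum>y<2^Suc m. outcome_prob (Suc m) Vid z y)
     = (\<Sum>y<2^Suc m. (cmod (hadamard_n (Suc m) (oracle_U z (hadamard_n (Suc m) (init_state (2^Suc m)))) y))^2)"
    unfolding outcome_prob_def final_state_def by (intro sum.cong refl) (simp add: apply_Vid)
  also have "\<dots> = 1"
    unfolding parseval oracle_norm parseval init_norm ..
  finally show ?thesis .
qed

lemma p0_eq: "outcome_prob (Suc m) Vid z 0 = (Ssum m z)^2 / (2 * (2^Suc m)^2)"
proof -
  let ?N = "(2::real)^Suc m"
  have "final_state (Suc m) Vid z 0 = hadamard_n (Suc m) (oracle_U z (hadamard_n (Suc m) (init_state (2^Suc m)))) 0"
    unfolding final_state_def by (simp add: apply_Vid)
  also have "\<dots> = of_real (1 / sqrt ?N) * (\<Sum>x<2^Suc m. of_real (fz z x * ((sg (Suc m) x (2^m) + sg (Suc m) x (2^m - 1)) / (sqrt ?N * sqrt 2))))"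
    unfolding had_init oracle_fz had_sg sg_zero by simp
  also have "\<dots> = of_real (Ssum m z / (?N * sqrt 2))"
  proof -
    have "(1 / sqrt ?N) * (\<Sum>x<2^Suc m. fz z x * ((sg (Suc m) x (2^m) + sg (Suc m) x (2^m - 1)) / (sqrt ?N * sqrt 2)))
        = Ssum m z / (sqrt ?N * sqrt ?N * sqrt 2)"
      unfolding Ssum_def by (simp add: sum_divide_distrib[symmetric] field_simps)
    also have "sqrt ?N * sqrt ?N = ?N" by simp
    finally show ?thesis by (simp del: of_real_divide of_real_mult of_real_sum add: of_real_sum[symmetric] of_real_mult[symmetric])
  qed
  finally have fs: "final_state (Suc m) Vid z 0 = of_real (Ssum m z / (?N * sqrt 2))" .
  show ?thesis unfolding outcome_prob_def fs norm_of_real power2_abs by (simp add: power_divide power_mult_distrib)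
qed

lemma bdot_lt2: "bdot n x j < 2" by (simp add: bdot_def)

lemma fz_codeword: "fz (codeword n j) x = sg n x j"
proof -
  have "bdot n x j = 0 \<or> bdot n x j = 1" using bdot_lt2[of n x j] by linarith
  thus ?thesis unfolding fz_def codeword_def sg_def by auto
qed

lemma S_codeword: "j < 2^Suc m \<Longrightarrow> Ssum m (codeword (Suc m) j) =
   2^Suc m * ((if j = 2^m then 1 else 0) + (if j = 2^m - 1 then 1 else 0))"
proof -
  assume j: "j < 2^Suc m"
  have "Ssum m (codeword (Suc m) j) = (\<Sum>x<2^Suc m. sg (Suc m) x j * sg (Suc m) x (2^m))
       + (\<Sum>x<2^Suc m. sg (Suc m) x j * sg (Suc m) x (2^m - 1))"
    unfolding Ssum_def fz_codeword by (simp add: algebra_simps sum.distrib)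
  also have "\<dots> = 2^Suc m * ((if j = 2^m then 1 else 0) + (if j = 2^m - 1 then 1 else 0))"
    by (subst sg_orth[OF j ab_less(1)], subst sg_orth[OF j ab_less(2)]) simp
  finally show ?thesis .
qed

lemma abs_sg: "\<bar>sg n x y\<bar> = 1" unfolding sg_def by simp

lemma S_perturb: "\<bar>Ssum m z - Ssum m v\<bar> \<le> 4 * real (hamming (2^Suc m) z v)"
proof -
  let ?e = "\<lambda>x. sg (Suc m) x (2^m) + sg (Suc m) x (2^m - 1)"
  have "\<bar>Ssum m z - Ssum m v\<bar> = \<bar>\<Sum>x<2^Suc m. (fz z x - fz v x) * ?e x\<bar>"
    unfolding Ssum_def by (simp add: sum_subtractf[symmetric] algebra_simps)
  also have "\<dots> \<le> (\<Sum>x<2^Suc m. \<bar>(fz z x - fz v x) * ?e x\<bar>)" by (rule sum_abs)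
  also have "\<dots> \<le> (\<Sum>x<2^Suc m. (if z x \<noteq> v x then 4 else 0))"
  proof (rule sum_mono)
    fix x
    have ee: "\<bar>?e x\<bar> \<le> 2" using abs_triangle_ineq[of "sg (Suc m) x (2^m)" "sg (Suc m) x (2^m - 1)"]
      by (simp add: abs_sg)
    show "\<bar>(fz z x - fz v x) * ?e x\<bar> \<le> (if z x \<noteq> v x then 4 else 0)"
      using ee by (auto simp: fz_def abs_mult)
  qed
  also have "\<dots> = (\<Sum>x\<in>{x\<in>{..<2^Suc m}. z x \<noteq> v x}. 4)"
    by (rule sum.inter_filter[symmetric]) simp
  also have "\<dots> = 4 * real (hamming (2^Suc m) z v)"
  proof -
    have "{x\<in>{..<2^Suc m}. z x \<noteq> v x} = {x. x < 2^Suc m \<and> z x \<noteq> v x}" by auto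
    thus ?thesis unfolding hamming_def by simp
  qed
  finally show ?thesis .
qed

lemma pA: assumes "z \<in> setA (Suc m)" shows "outcome_prob (Suc m) Vid z 0 \<ge> 9/32"
proof -
  let ?N = "(2::real)^Suc m"
  have z: "real (hamming (2^Suc m) z (codeword (Suc m) (2^m - 1))) < ?N / 16"
    using assms unfolding setA_def Xi_def by simp
  have SW: "Ssum m (codeword (Suc m) (2^m - 1)) = ?N"
    using S_codeword[OF ab_less(2)] ab_less(3)[of m] by simp
  have h1: "Ssum m z \<ge> 3 * ?N / 4"
    using S_perturb[of m z "codeword (Suc m) (2^m - 1)"] z SW by linarith
  have h2: "0 \<le> 3 * ?N / 4" by simp
  have "(3 * ?N / 4)^2 \<le> (Ssum m z)^2" by (rule power_mono[OF h1 h2])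
  hence "9/32 \<le> (Ssum m z)^2 / (2 * ?N^2)"
    by (simp add: field_simps power2_eq_square)
  thus ?thesis unfolding p0_eq by simp
qed

lemma pB: assumes "z \<in> setB (Suc m)" and m: "m \<ge> 1" shows "outcome_prob (Suc m) Vid z 0 \<le> 1/32"
proof -
  let ?N = "(2::real)^Suc m"
  obtain k where k: "k \<le> 2^m - 2" and z: "real (hamming (2^Suc m) z (codeword (Suc m) k)) < ?N / 16"
    using assms(1) unfolding setB_def Xi_def by auto
  have "(2::nat) \<le> 2^m" using power_increasing[OF m, of "2::nat"] by simp
  hence k1: "k < 2^m - 1" "k \<noteq> 2^m" and kl: "k < 2^Suc m" using k by auto
  have SW: "Ssum m (codeword (Suc m) k) = 0"
    using S_codeword[OF kl] k1 by simp
  have h: "\<bar>Ssum m z\<bar> \<le> ?N / 4"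
    using S_perturb[of m z "codeword (Suc m) k"] z SW by linarith
  have "\<bar>Ssum m z\<bar>^2 \<le> (?N / 4)^2" by (rule power_mono[OF h abs_ge_zero])
  hence "(Ssum m z)^2 \<le> (?N / 4)^2" by simp
  hence "(Ssum m z)^2 / (2 * ?N^2) \<le> 1/32"
    by (simp add: field_simps power2_eq_square)
  thus ?thesis unfolding p0_eq by simp
qed

lemma sq_bound: "(c::real) \<ge> 0 \<Longrightarrow> c \<le> \<bar>t\<bar> \<Longrightarrow> c^2 \<le> t^2"
  using power_mono[of c "\<bar>t\<bar>" 2] by simp

theorem claim2:
  fixes \<delta> :: real
  assumes "\<delta> > 0"
  shows "\<exists>q::nat. \<forall>n::nat. n \<ge> 2 \<longrightarrow>
           (\<exists>V decide. unitary_mat (2^n) V \<and>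
              (\<forall>z \<in> setA n \<union> setB n.
                 runs_prob n V z q (\<lambda>ys. decide ys \<noteq> (z \<in> setA n)) \<le> \<delta>))"
proof -
  define q where "q = nat \<lceil>16/\<delta>\<rceil> + 1"
  have qge: "real q > 16 / \<delta>" unfolding q_def by linarith
  hence qpos: "real q > 0" using assms by (smt (verit) divide_pos_pos)
  have qd: "16 / real q \<le> \<delta>"
    using qge qpos assms by (simp add: field_simps)
  define K where "K = (real q)^2 / 64"
  have Kpos: "K > 0" unfolding K_def using qpos by simp
  have bound: "real q / (4 * K) \<le> \<delta>"
    using qd qpos unfolding K_def by (simp add: power2_eq_square field_simps)
  show ?thesis
  proof (intro exI[of _ q] allI impI)
    fix n :: nat assume n2: "2 \<le> n"
    define m where "m = n - 1"
    have nm: "n = Suc m" and m1: "m \<ge> 1" using n2 unfolding m_def by auto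
    let ?dec = "\<lambda>ys. 5/32 * real q \<le> cnt0 ys"
    show "\<exists>V decide. unitary_mat (2^n) V \<and>
              (\<forall>z \<in> setA n \<union> setB n.
                 runs_prob n V z q (\<lambda>ys. decide ys \<noteq> (z \<in> setA n)) \<le> \<delta>)"
    proof (intro exI[of _ Vid] exI[of _ ?dec] conjI ballI)
      show "unitary_mat (2^n) Vid" by (rule Vid_unitary)
      fix z assume zC: "z \<in> setA n \<union> setB n"
      let ?p = "outcome_prob n Vid z"
      have tot: "(\<Sum>y<2^n. ?p y) = 1" unfolding nm by (rule total_prob)
      have Npos: "(0::nat) < 2^n" by simp
      have pnn: "\<And>y. ?p y \<ge> 0" unfolding outcome_prob_def by simp
      have P: "K \<le> (cnt0 ys - real q * ?p 0)^2" if "?dec ys \<noteq> (z \<in> setA n)" for ys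
      proof (cases "z \<in> setA n")
        case True
        have p0: "?p 0 \<ge> 9/32" using pA[of z m] True unfolding nm by simp
        have "real q * (9/32) \<le> real q * ?p 0" using p0 qpos by (intro mult_left_mono) auto
        moreover have "cnt0 ys < 5/32 * real q" using that True by simp
        ultimately have "real q / 8 \<le> \<bar>cnt0 ys - real q * ?p 0\<bar>" by linarith
        thus ?thesis unfolding K_def using sq_bound[of "real q / 8"] qpos
          by (simp add: power_divide)
      next
        case False
        hence zB: "z \<in> setB n" using zC by simp
        have p0: "?p 0 \<le> 1/32" using pB[of z m] zB m1 unfolding nm by simp
        have "real q * ?p 0 \<le> real q * (1/32)" using p0 qpos by (intro mult_left_mono) auto
        moreover have "5/32 * real q \<le> cnt0 ys" using that False by simp
        ultimately have "real q / 8 \<le> \<bar>cnt0 ys - real q * ?p 0\<bar>" by linarith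
        thus ?thesis unfolding K_def using sq_bound[of "real q / 8"] qpos
          by (simp add: power_divide)
      qed
      have "runs_prob n Vid z q (\<lambda>ys. ?dec ys \<noteq> (z \<in> setA n)) \<le> real q / (4 * K)"
        unfolding runs_prob_def by (rule cheb[OF tot Npos pnn Kpos P])
      thus "runs_prob n Vid z q (\<lambda>ys. ?dec ys \<noteq> (z \<in> setA n)) \<le> \<delta>" using bound by linarith
    qed
  qed
qed

end
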